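(* For every $\widetilde r\in\mathbb{N}$ and $r_0\in\{0,\dots,b-1\}$, \[\mathrm{Var}(\mu^{(b\widetilde r+r_0)})=\frac{b-r_0}{b}\mathrm{Var}(\mu^{(\widetilde r)})+\frac{r_0}{b}\mathrm{Var}(\mu^{(\widetilde r+1)})+r_0(b-r_0).\]
   Context: Fix an integer $b\ge2$. For $n\in\mathbb{N}$ with base-$b$ digits $n_k$, $s(n):=\sum_kn_k$. For $r,n\in\mathbb{N}$, $\Delta^{(r)}(n):=s(n+r)-s(n)$, and $\mu^{(r)}(d):=\lim_{N\to\infty}\frac1N|\{n<N:\Delta^{(r)}(n)=d\}|$ for $d\in\mathbb{Z}$; these limits exist and $\mu^{(r)}$ is a probability measure on $\mathbb{Z}$ with finite moments and mean zero. $\mathrm{Var}(\mu^{(r)})$ is its variance. *)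

theory Defs
  imports "HOL-Analysis.Analysis"
begin

text \<open>Base-b digit sum: the k-th digit of n is (n div b^k) mod b; all digits
  with index k > n vanish (b \<ge> 2), so summing over k \<le> n is the full sum.\<close>
definition digsum :: "nat \<Rightarrow> nat \<Rightarrow> int" where
  "digsum b n = (\<Sum>k\<le>n. int ((n div b ^ k) mod b))"

definition Delta :: "nat \<Rightarrow> nat \<Rightarrow> nat \<Rightarrow> int" where
  "Delta b r n = digsum b (n + r) - digsum b n"

definition mu :: "nat \<Rightarrow> nat \<Rightarrow> int \<Rightarrow> real" where
  "mu b r d = lim (\<lambda>N. real (card {n. n < N \<and> Delta b r n = d}) / real N)"

definition mean_mu :: "nat \<Rightarrow> nat \<Rightarrow> real" where
  "mean_mu b r = (\<Sum>\<^sub>\<infinity>d\<in>(UNIV::int set). real_of_int d * mu b r d)"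

definition Var_mu :: "nat \<Rightarrow> nat \<Rightarrow> real" where
  "Var_mu b r = (\<Sum>\<^sub>\<infinity>d\<in>(UNIV::int set). (real_of_int d - mean_mu b r)\<^sup>2 * mu b r d)"

end

theory Submission
  imports Defs
begin


definition S :: "nat \<Rightarrow> nat \<Rightarrow> nat \<Rightarrow> int" where
  "S b K n = (\<Sum>k<K. int ((n div b ^ k) mod b))"

lemma S_ext:
  assumes "b \<ge> 2" "n < b ^ K"
  shows "S b (K + j) n = S b K n"
proof (induction j)
  case 0 then show ?case by simp
next
  case (Suc j)
  have "b ^ K \<le> b ^ (K + j)" using assms(1) by (intro power_increasing) auto
  then have "n < b ^ (K + j)" using assms by linarith
  then have "n div b ^ (K + j) = 0" by (simp add: div_less)
  then show ?case using Suc by (simp add: S_def)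
qed

lemma S_eq:
  assumes "b \<ge> 2" "n < b ^ K" "n < b ^ K'"
  shows "S b K n = S b K' n"
proof (cases "K \<le> K'")
  case True
  then show ?thesis using S_ext[OF assms(1,2), of "K' - K"] by simp
next
  case False
  then show ?thesis using S_ext[OF assms(1,3), of "K - K'"] by simp
qed

lemma n_less_pow: "b \<ge> 2 \<Longrightarrow> n < b ^ n"
proof -
  assume "b \<ge> 2"
  have "n < 2 ^ n" by (rule less_exp)
  also have "2 ^ n \<le> b ^ n" using \<open>b \<ge> 2\<close> by (intro power_mono) auto
  finally show ?thesis .
qed

lemma digsum_S:
  assumes "b \<ge> 2" "n < b ^ K"
  shows "digsum b n = S b K n"
proof -
  have "digsum b n = S b (Suc n) n"
    unfolding digsum_def S_def by (simp add: lessThan_Suc_atMost)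
  also have "\<dots> = S b K n"
    using assms n_less_pow[OF assms(1), of n] by (intro S_eq) (auto intro: less_trans)
  finally show ?thesis .
qed

lemma S_Suc: "S b (Suc K) n = int (n mod b) + S b K (n div b)"
  unfolding S_def by (simp only: sum.lessThan_Suc_shift) (simp add: div_mult2_eq power_Suc)

lemma digsum_rec:
  assumes "b \<ge> 2" "n0 < b"
  shows "digsum b (b * m + n0) = int n0 + digsum b m"
proof -
  define n where "n = b * m + n0"
  have nm: "n div b = m" "n mod b = n0" using assms by (auto simp: n_def)
  have "m < b ^ m" using n_less_pow[OF assms(1)] .
  have "n < b ^ Suc m"
  proof -
    have "n < b * m + b" using assms by (simp add: n_def)
    also have "\<dots> = b * (m + 1)" by simp
    also have "\<dots> \<le> b * b ^ m" using \<open>m < b ^ m\<close> by (intro mult_le_mono2) auto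
    finally show ?thesis by simp
  qed
  then have "digsum b n = S b (Suc m) n" using digsum_S assms by blast
  also have "\<dots> = int n0 + S b m m" using S_Suc nm by simp
  also have "S b m m = digsum b m" using digsum_S[OF assms(1) \<open>m < b ^ m\<close>] by simp
  finally show ?thesis by (simp add: n_def)
qed

lemma Delta_rec:
  assumes "b \<ge> 2" "n0 < b" "r0 < b"
  shows "Delta b (b * rt + r0) (b * m + n0) =
     (if n0 + r0 < b then Delta b rt m + int r0 else Delta b (rt + 1) m + int r0 - int b)"
proof (cases "n0 + r0 < b")
  case True
  have e: "b * m + n0 + (b * rt + r0) = b * (m + rt) + (n0 + r0)" by (simp add: algebra_simps)
  show ?thesis unfolding Delta_def e using True assms digsum_rec[of b "n0+r0" "m+rt"] digsum_rec[of b n0 m]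
    by (simp add: Delta_def)
next
  case False
  have e: "b * m + n0 + (b * rt + r0) = b * (m + (rt + 1)) + (n0 + r0 - b)" using False by (simp add: algebra_simps)
  show ?thesis unfolding Delta_def e using False assms digsum_rec[of b "n0+r0-b" "m+(rt+1)"] digsum_rec[of b n0 m]
    by (simp add: Delta_def of_nat_diff)
qed



definition cnt :: "nat \<Rightarrow> nat \<Rightarrow> int \<Rightarrow> nat \<Rightarrow> nat" where
  "cnt b r d N = card {n. n < N \<and> Delta b r n = d}"

lemma card_sum_ind: "card {n. n < (N::nat) \<and> P n} = (\<Sum>n<N. if P n then 1 else 0::nat)"
proof (induction N)
  case 0 then show ?case by simp
next
  case (Suc N)
  have "{n. n < Suc N \<and> P n} = {n. n < N \<and> P n} \<union> (if P N then {N} else {})"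
    by (auto simp: less_Suc_eq)
  then show ?case using Suc by auto
qed

lemma sum_split_add: "(\<Sum>n<a + c. f n) = (\<Sum>n<a. f n) + (\<Sum>i<c. f (a + i::nat))"
  by (induction c) (auto simp: add.assoc)

lemma sum_block: "(\<Sum>n<b * M. f n) = (\<Sum>m<M. \<Sum>i<b. f (b * m + i::nat))"
proof (induction M)
  case 0 then show ?case by simp
next
  case (Suc M)
  have "b * Suc M = b * M + b" by simp
  then have "(\<Sum>n<b * Suc M. f n) = (\<Sum>n<b * M + b. f n)" by (simp only:)
  then show ?case using Suc sum_split_add[of f "b*M" b] by simp
qed

lemma cnt_rec:
  assumes "b \<ge> 2" "r0 < b"
  shows "cnt b (b * rt + r0) d (b * M) =
    (b - r0) * cnt b rt (d - int r0) M + r0 * cnt b (rt + 1) (d - int r0 + int b) M"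
proof -
  let ?I = "\<lambda>P. if P then 1 else (0::nat)"
  have inner: "(\<Sum>i<b. ?I (Delta b (b * rt + r0) (b * m + i) = d)) =
      (b - r0) * ?I (Delta b rt m = d - int r0) + r0 * ?I (Delta b (rt + 1) m = d - int r0 + int b)" for m
  proof -
    have "(\<Sum>i<b. ?I (Delta b (b * rt + r0) (b * m + i) = d)) =
       (\<Sum>i<b - r0. ?I (Delta b (b * rt + r0) (b * m + i) = d)) +
       (\<Sum>i<r0. ?I (Delta b (b * rt + r0) (b * m + (b - r0 + i)) = d))"
      using sum_split_add[of "\<lambda>i. ?I (Delta b (b * rt + r0) (b * m + i) = d)" "b - r0" r0] assms by simp
    also have "(\<Sum>i<b - r0. ?I (Delta b (b * rt + r0) (b * m + i) = d)) =
        (\<Sum>i<b - r0. ?I (Delta b rt m = d - int r0))"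
      using assms by (intro sum.cong refl) (auto simp: Delta_rec)
    also have "(\<Sum>i<r0. ?I (Delta b (b * rt + r0) (b * m + (b - r0 + i)) = d)) =
        (\<Sum>i<r0. ?I (Delta b (rt + 1) m = d - int r0 + int b))"
    proof (intro sum.cong refl)
      fix i assume "i \<in> {..<r0}"
      then have "Delta b (b * rt + r0) (b * m + (b - r0 + i)) = Delta b (rt + 1) m + int r0 - int b"
        using assms Delta_rec[of b "b - r0 + i" r0 rt m] by auto
      then show "?I (Delta b (b * rt + r0) (b * m + (b - r0 + i)) = d) = ?I (Delta b (rt + 1) m = d - int r0 + int b)"
        by auto
    qed
    finally show ?thesis by simp
  qed
  have "cnt b (b * rt + r0) d (b * M) = (\<Sum>m<M. \<Sum>i<b. ?I (Delta b (b * rt + r0) (b * m + i) = d))"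
    unfolding cnt_def card_sum_ind sum_block ..
  also have "\<dots> = (\<Sum>m<M. (b - r0) * ?I (Delta b rt m = d - int r0) + r0 * ?I (Delta b (rt + 1) m = d - int r0 + int b))"
    using inner by simp
  also have "\<dots> = (b - r0) * cnt b rt (d - int r0) M + r0 * cnt b (rt + 1) (d - int r0 + int b) M"
    unfolding cnt_def card_sum_ind by (simp add: sum.distrib sum_distrib_left)
  finally show ?thesis .
qed

lemma cnt_mono: "cnt b r d N \<le> cnt b r d (N + k)"
  unfolding cnt_def by (intro card_mono) auto

lemma cnt_lip: "cnt b r d (N + k) \<le> cnt b r d N + k"
proof -
  have "{n. n < N + k \<and> Delta b r n = d} \<subseteq> {n. n < N \<and> Delta b r n = d} \<union> {N..<N+k}" by auto
  then have "cnt b r d (N + k) \<le> card ({n. n < N \<and> Delta b r n = d} \<union> {N..<N+k})"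
    unfolding cnt_def by (intro card_mono) auto
  also have "\<dots> \<le> cnt b r d N + k" unfolding cnt_def using card_Un_le[of "{n. n < N \<and> Delta b r n = d}" "{N..<N+k}"] by simp
  finally show ?thesis .
qed

lemma cnt_le: "cnt b r d N \<le> N"
  using cnt_lip[of b r d 0 N] by (simp add: cnt_def)



lemma block_ineq:
  fixes x y k n t b :: real
  assumes "y \<le> x" "x \<le> y + t" "0 \<le> y" "y \<le> k" "n = k + t" "k > 0" "0 \<le> t" "t \<le> b"
  shows "\<bar>x / n - y / k\<bar> \<le> 2 * b / n"
proof -
  have n: "n > 0" using assms by linarith
  have a1: "(x - y) * k \<le> t * k" using assms by (intro mult_right_mono) auto
  have a2: "y * t \<ge> 0" using assms by simp
  have a3: "y * t \<le> k * t" using assms by (intro mult_right_mono) auto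
  have a4: "(x - y) * k \<ge> 0" using assms by simp
  have a5: "t * k \<le> b * k" using assms by (intro mult_right_mono) auto
  have ee: "x * k - y * n = (x - y) * k - y * t" using assms by (simp add: algebra_simps)
  have h1: "x * k - y * n \<le> 2 * b * k" "y * n - x * k \<le> 2 * b * k"
    using a1 a2 a3 a4 a5 ee by (auto simp: algebra_simps)
  have e: "x / n - y / k = (x * k - y * n) / (n * k)" using n assms by (simp add: field_simps)
  have "\<bar>x * k - y * n\<bar> \<le> 2 * b * k" using h1 by linarith
  then have "\<bar>x * k - y * n\<bar> / (n * k) \<le> 2 * b * k / (n * k)"
    using n assms by (intro divide_right_mono) auto
  also have "\<dots> = 2 * b / n" using assms by simp
  finally show ?thesis using e n assms by (simp add: abs_divide abs_mult)
qed

lemma lim_from_block: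
  fixes C :: "nat \<Rightarrow> nat" and b :: nat
  assumes b: "b \<ge> 1" and C00: "C 0 = 0" and mono: "\<And>N k. C N \<le> C (N + k)" and lip: "\<And>N k. C (N + k) \<le> C N + k"
    and lim: "(\<lambda>M. real (C (b * M)) / real (b * M)) \<longlonglongrightarrow> L"
  shows "(\<lambda>N. real (C N) / real N) \<longlonglongrightarrow> L"
proof -
  define g where "g N = real (C (b * (N div b))) / real (b * (N div b))" for N
  have div: "filterlim (\<lambda>N. N div b) at_top sequentially"
    unfolding filterlim_at_top eventually_at_top_linorder
  proof (intro allI exI allI impI)
    fix Z N :: nat assume "Z * b \<le> N"
    then have "Z * b div b \<le> N div b" by (rule div_le_mono)
    then show "Z \<le> N div b" using b by simp
  qed
  have g_lim: "g \<longlonglongrightarrow> L"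
    using filterlim_compose[OF lim div] unfolding g_def o_def by simp
  have C0: "C N \<le> N" for N using lip[of 0 N] C00 by simp
  have bound: "norm (real (C N) / real N - g N) \<le> 2 * real b / real N" if "N > 0" for N
  proof -
    define K where "K = b * (N div b)"
    define t where "t = N mod b"
    have NK: "N = K + t" unfolding K_def t_def by simp
    have tb: "t < b" unfolding t_def using b by simp
    show ?thesis
    proof (cases "K = 0")
      case True
      then have "g N = 0" unfolding g_def K_def by simp
      moreover have "real (C N) / real N \<le> 1" using C0[of N] that by simp
      moreover have "1 \<le> 2 * real b / real N" using NK True tb that by (simp add: field_simps)
      ultimately show ?thesis by simp
    next
      case False
      have "\<bar>real (C N) / real N - real (C K) / real K\<bar> \<le> 2 * real b / real N"
        apply (rule block_ineq)
        using mono[of K t] lip[of K t] C0[of K] NK tb False by auto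
      then show ?thesis unfolding g_def K_def by simp
    qed
  qed
  have "(\<lambda>N. real (C N) / real N - g N) \<longlonglongrightarrow> 0"
  proof (rule Lim_null_comparison)
    show "\<forall>\<^sub>F N in sequentially. norm (real (C N) / real N - g N) \<le> 2 * real b / real N"
      using bound by (intro eventually_sequentiallyI[of 1]) auto
    show "(\<lambda>N. 2 * real b / real N) \<longlonglongrightarrow> 0" by (rule lim_const_over_n)
  qed
  from tendsto_add[OF this g_lim] show ?thesis by simp
qed



definition av :: "nat \<Rightarrow> nat \<Rightarrow> int \<Rightarrow> nat \<Rightarrow> real" where
  "av b r d N = real (cnt b r d N) / real N"

lemma mu_av: "mu b r d = lim (av b r d)"
  unfolding mu_def av_def cnt_def ..

lemma mu_eq: "av b r d \<longlonglongrightarrow> x \<Longrightarrow> mu b r d = x"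
  unfolding mu_av by (rule limI)

lemma rec_conv:
  assumes b: "b \<ge> 2" "r0 < b"
    and hA: "av b rt (d - int r0) \<longlonglongrightarrow> A"
    and hB: "r0 > 0 \<Longrightarrow> av b (rt + 1) (d - int r0 + int b) \<longlonglongrightarrow> B"
  shows "av b (b * rt + r0) d \<longlonglongrightarrow> real (b - r0) / real b * A + real r0 / real b * B"
proof -
  have eq: "real (cnt b (b * rt + r0) d (b * M)) / real (b * M) =
     real (b - r0) / real b * av b rt (d - int r0) M + real r0 / real b * av b (rt + 1) (d - int r0 + int b) M" for M
  proof (cases "M = 0")
    case True then show ?thesis by (simp add: av_def cnt_def)
  next
    case False
    then show ?thesis using b unfolding av_def cnt_rec[OF b]
      by (simp add: field_simps)
  qed
  have t1: "(\<lambda>M. real (b - r0) / real b * av b rt (d - int r0) M) \<longlonglongrightarrow> real (b - r0) / real b * A"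
    by (intro tendsto_mult_left hA)
  have t2: "(\<lambda>M. real r0 / real b * av b (rt + 1) (d - int r0 + int b) M) \<longlonglongrightarrow> real r0 / real b * B"
  proof (cases "r0 = 0")
    case True then show ?thesis by simp
  next
    case False then show ?thesis by (intro tendsto_mult_left hB) simp
  qed
  have "(\<lambda>M. real (cnt b (b * rt + r0) d (b * M)) / real (b * M)) \<longlonglongrightarrow> real (b - r0) / real b * A + real r0 / real b * B"
    unfolding eq by (rule tendsto_add[OF t1 t2])
  then have "(\<lambda>N. real (cnt b (b * rt + r0) d N) / real N) \<longlonglongrightarrow> real (b - r0) / real b * A + real r0 / real b * B"
    using b by (intro lim_from_block[where b = b]) (auto simp: cnt_mono cnt_lip, simp add: cnt_def)
  then show ?thesis unfolding av_def .
qed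

lemma Delta0: "Delta b 0 n = 0" by (simp add: Delta_def)

lemma av0: "av b 0 d \<longlonglongrightarrow> (if d = 0 then 1 else 0)"
proof -
  have "av b 0 d N = (if d = 0 then 1 else 0)" if "N > 0" for N
    using that by (auto simp: av_def cnt_def Delta0)
  then have "\<forall>\<^sub>F N in sequentially. (if d = 0 then 1 else 0) = av b 0 d N"
    by (intro eventually_sequentiallyI[of 1]) auto
  then show ?thesis by (rule Lim_transform_eventually[OF tendsto_const])
qed

lemma mu0: "mu b 0 d = (if d = 0 then 1 else 0)"
  by (rule mu_eq[OF av0])

lemma Delta1_le:
  assumes b: "b \<ge> 2"
  shows "Delta b 1 n \<le> 1"
proof (induction n rule: less_induct)
  case (less n)
  define m where "m = n div b"
  define n0 where "n0 = n mod b"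
  have n: "n = b * m + n0" unfolding m_def n0_def by simp
  have n0b: "n0 < b" unfolding n0_def using b by simp
  have r: "Delta b 1 n = Delta b (b * 0 + 1) (b * m + n0)" using n by simp
  show ?case
  proof (cases "n0 + 1 < b")
    case True
    then show ?thesis unfolding r using Delta_rec[OF b n0b, of 1 0 m] b by (simp add: Delta0)
  next
    case False
    then have "n > 0" using n b by auto
    then have "m < n" unfolding m_def using b by simp
    then show ?thesis unfolding r using Delta_rec[OF b n0b, of 1 0 m] b False less[of m] by simp
  qed
qed



definition nu :: "nat \<Rightarrow> int \<Rightarrow> real" where
  "nu b d = (if d \<le> 1 \<and> (int b - 1) dvd (1 - d)
             then (real b - 1) / real b ^ (nat ((1 - d) div (int b - 1)) + 1) else 0)"

lemma nu_rec:
  assumes b: "b \<ge> 2"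
  shows "nu b d = (real b - 1) / real b * (if d = 1 then 1 else 0) + nu b (d + int b - 1) / real b"
proof -
  define c where "c = int b - 1"
  have c0: "c > 0" using b unfolding c_def by simp
  have dc: "d + int b - 1 = d + c" unfolding c_def by simp
  consider "d > 1" | "d = 1" | "d < 1" by linarith
  then show ?thesis
  proof cases
    case 1
    then show ?thesis using c0 unfolding nu_def dc c_def[symmetric] by auto
  next
    case 2
    have "\<not> (1 + c \<le> 1)" using c0 by simp
    then show ?thesis using 2 unfolding nu_def dc c_def[symmetric] by simp
  next
    case 3
    show ?thesis
    proof (cases "c dvd (1 - d)")
      case True
      then obtain k where k: "1 - d = c * k" by blast
      have k1: "k \<ge> 1" using k c0 3
        by (metis int_one_le_iff_zero_less less_diff_eq pos_imp_zdiv_pos_iff verit_comp_simplify1(1) zero_less_mult_pos mult.commute diff_gt_0_iff_gt) 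
      have e2: "1 - (d + c) = c * (k - 1)" using k by (simp add: algebra_simps)
      have dvd2: "c dvd (1 - (d + c))" using e2 by simp
      have le2: "d + c \<le> 1" using e2 c0 k1 by (smt (verit) mult_nonneg_nonneg)
      have q1: "(1 - d) div c = k" using k c0 by simp
      have q2: "(1 - (d + c)) div c = k - 1" using e2 c0 by simp
      have nk: "nat k = nat (k - 1) + 1" using k1 by simp
      have "nu b d = (real b - 1) / real b ^ (nat k + 1)"
        unfolding nu_def c_def[symmetric] using 3 True q1 by simp
      moreover have "nu b (d + int b - 1) = (real b - 1) / real b ^ (nat (k - 1) + 1)"
        unfolding nu_def dc c_def[symmetric] using le2 dvd2 q2 by simp
      ultimately show ?thesis using 3 nk by (simp add: field_simps)
    next
      case False
      have "\<not> c dvd (1 - (d + c))"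
      proof
        assume "c dvd (1 - (d + c))"
        then have "c dvd (1 - (d + c) + c)" by (rule dvd_add) simp
        moreover have "1 - (d + c) + c = 1 - d" by simp
        ultimately show False using False by simp
      qed
      then show ?thesis using False 3 unfolding nu_def dc c_def[symmetric] by simp
    qed
  qed
qed

lemma conv1:
  assumes b: "b \<ge> 2"
  shows "av b 1 d \<longlonglongrightarrow> nu b d"
proof (induction "nat (2 - d)" arbitrary: d rule: less_induct)
  case less
  show ?case
  proof (cases "d > 1")
    case True
    have "av b 1 d N = 0" for N
    proof -
      have "Delta b 1 n \<noteq> d" for n using Delta1_le[OF b, of n] True by simp
      then have "{n. n < N \<and> Delta b 1 n = d} = {}" by auto
      then show ?thesis by (simp add: av_def cnt_def)
    qed
    then have z: "av b 1 d = (\<lambda>_. 0)" by (intro ext)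
    have "nu b d = 0" using True by (simp add: nu_def)
    then show ?thesis unfolding z by simp
  next
    case False
    have hA: "av b 0 (d - int 1) \<longlonglongrightarrow> (if d - int 1 = 0 then 1 else 0)" by (rule av0)
    have lt: "nat (2 - (d - int 1 + int b)) < nat (2 - d)" using False b by simp
    have hB: "av b (0 + 1) (d - int 1 + int b) \<longlonglongrightarrow> nu b (d - int 1 + int b)"
      using less[OF lt] by simp
    have "av b (b * 0 + 1) d \<longlonglongrightarrow> real (b - 1) / real b * (if d - int 1 = 0 then 1 else 0) + real 1 / real b * nu b (d - int 1 + int b)"
      by (rule rec_conv[OF b _ hA hB]) (use b in simp)
    moreover have "real (b - 1) / real b * (if d - int 1 = 0 then 1 else 0) + real 1 / real b * nu b (d - int 1 + int b) = nu b d"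
      using nu_rec[OF b, of d] b by (simp add: of_nat_diff algebra_simps)
    ultimately show ?thesis by simp
  qed
qed

lemma mu1: "b \<ge> 2 \<Longrightarrow> mu b 1 d = nu b d"
  by (rule mu_eq[OF conv1])



lemma has_sum_shift:
  fixes f :: "int \<Rightarrow> real"
  assumes "(f has_sum s) UNIV"
  shows "((\<lambda>d. f (d - c)) has_sum s) UNIV"
proof -
  have inj: "inj_on (\<lambda>d::int. d - c) UNIV" by (auto simp: inj_on_def)
  have r: "(\<lambda>d::int. d - c) ` UNIV = UNIV"
    by (metis (no_types, lifting) surjI[of "\<lambda>d::int. d - c" "\<lambda>d. d + c"] add_diff_cancel_right')
  from assms have "(f has_sum s) ((\<lambda>d::int. d - c) ` UNIV)" unfolding r .
  then have "((f \<circ> (\<lambda>d. d - c)) has_sum s) UNIV" using has_sum_reindex[OF inj] by blast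
  then show ?thesis by (simp add: o_def)
qed

lemma shift_moments:
  fixes A :: "int \<Rightarrow> real"
  assumes h0: "(A has_sum m0) UNIV" and h1: "((\<lambda>e. real_of_int e * A e) has_sum m1) UNIV"
    and h2: "((\<lambda>e. (real_of_int e)^2 * A e) has_sum m2) UNIV"
  shows "((\<lambda>d. A (d - c)) has_sum m0) UNIV"
    "((\<lambda>d. real_of_int d * A (d - c)) has_sum (m1 + real_of_int c * m0)) UNIV"
    "((\<lambda>d. (real_of_int d)^2 * A (d - c)) has_sum (m2 + 2 * real_of_int c * m1 + (real_of_int c)^2 * m0)) UNIV"
proof -
  show "((\<lambda>d. A (d - c)) has_sum m0) UNIV" by (rule has_sum_shift[OF h0])
  have "((\<lambda>e. real_of_int e * A e + real_of_int c * A e) has_sum (m1 + real_of_int c * m0)) UNIV"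
    by (intro has_sum_add h1 has_sum_cmult_right h0)
  from has_sum_shift[OF this, of c]
  show "((\<lambda>d. real_of_int d * A (d - c)) has_sum (m1 + real_of_int c * m0)) UNIV"
    by (simp add: algebra_simps)
  have "((\<lambda>e. (real_of_int e)^2 * A e + (2 * real_of_int c * (real_of_int e * A e) + (real_of_int c)^2 * A e)) has_sum (m2 + (2 * real_of_int c * m1 + (real_of_int c)^2 * m0))) UNIV"
    by (intro has_sum_add h2 has_sum_cmult_right h1 h0)
  from has_sum_shift[OF this, of c]
  show "((\<lambda>d. (real_of_int d)^2 * A (d - c)) has_sum (m2 + 2 * real_of_int c * m1 + (real_of_int c)^2 * m0)) UNIV"
    by (simp add: algebra_simps power2_eq_square)
qed

lemma summable_sq_geom: "summable (\<lambda>k::nat. (real k + 1)^2 / 2 ^ k)"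
proof (rule summable_ratio_test[where c = "8/9" and N = 2])
  fix n :: nat assume "n \<ge> 2"
  then have "3 * (real n + 2) \<le> 4 * (real n + 1)" by simp
  then have "(3 * (real n + 2))^2 \<le> (4 * (real n + 1))^2" by (intro power_mono) auto
  then have "9 * (real n + 2)^2 \<le> 16 * (real n + 1)^2" by (simp add: power2_eq_square algebra_simps)
  then show "norm ((real (Suc n) + 1)^2 / 2 ^ Suc n) \<le> 8/9 * norm ((real n + 1)^2 / 2 ^ n)"
    by (simp add: field_simps)
qed simp

lemma nu_summable:
  assumes b: "b \<ge> 2" and j: "j \<le> 2"
  shows "(\<lambda>d. (real_of_int d)^j * nu b d) summable_on UNIV"
proof -
  define g where "g k = 1 - int k * (int b - 1)" for k
  have inj: "inj_on g UNIV" using b unfolding g_def inj_on_def by auto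
  have nug: "nu b (g k) = (real b - 1) / real b ^ (k + 1)" for k
  proof -
    have "(1 - g k) div (int b - 1) = int k" using b unfolding g_def by simp
    moreover have "g k \<le> 1" using b unfolding g_def by simp
    moreover have "(int b - 1) dvd (1 - g k)" unfolding g_def by simp
    ultimately show ?thesis unfolding nu_def by simp
  qed
  have supp: "d \<in> range g" if "nu b d \<noteq> 0" for d
  proof -
    from that have "d \<le> 1" "(int b - 1) dvd (1 - d)" unfolding nu_def by (auto split: if_splits)
    then obtain q where q: "1 - d = (int b - 1) * q" by blast
    have "0 \<le> (int b - 1) * q" using q \<open>d \<le> 1\<close> by simp
    then have "q \<ge> 0" using b by (simp add: zero_le_mult_iff)
    then have "d = g (nat q)" using q unfolding g_def by (simp add: algebra_simps)
    then show ?thesis by simp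
  qed
  let ?f = "\<lambda>d. (real_of_int d)^j * nu b d"
  have bound: "norm ((?f \<circ> g) k) \<le> (real b)^2 * ((real k + 1)^2 / 2 ^ k)" for k
  proof -
    have gk: "real_of_int (g k) = 1 - real k * real b + real k" unfolding g_def by (simp add: algebra_simps)
    have kb: "real k \<le> real k * real b" using b by (simp add: mult_le_cancel_left1)
    have a1: "\<bar>real_of_int (g k)\<bar> \<le> (real k + 1) * real b"
      unfolding gk using kb b by (simp add: abs_le_iff algebra_simps)
    have "0 \<le> real b * real k" by simp
    moreover have "real b \<ge> 2" using b by simp
    moreover have "(real k + 1) * real b = real b * real k + real b" by (simp add: algebra_simps)
    ultimately have one: "1 \<le> (real k + 1) * real b" by linarith
    have "\<bar>real_of_int (g k)\<bar> ^ j \<le> ((real k + 1) * real b) ^ j"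
      using a1 by (intro power_mono) auto
    also have "\<dots> \<le> ((real k + 1) * real b) ^ 2" using one j by (intro power_increasing) auto
    finally have p: "\<bar>real_of_int (g k)\<bar> ^ j \<le> ((real k + 1) * real b) ^ 2" .
    have "(real b - 1) / real b ^ (k + 1) \<le> real b / real b ^ (k + 1)" using b by (intro divide_right_mono) auto
    also have "\<dots> = 1 / real b ^ k" using b by simp
    also have "\<dots> \<le> 1 / 2 ^ k" using b by (intro divide_left_mono power_mono) auto
    finally have q: "(real b - 1) / real b ^ (k + 1) \<le> 1 / 2 ^ k" .
    have q0: "0 \<le> (real b - 1) / real b ^ (k + 1)" using b by simp
    have "norm ((?f \<circ> g) k) = \<bar>real_of_int (g k)\<bar> ^ j * ((real b - 1) / real b ^ (k + 1))"
      using q0 b by (simp add: nug abs_mult power_abs)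
    also have "\<dots> \<le> ((real k + 1) * real b) ^ 2 * (1 / 2 ^ k)"
      using p q q0 by (intro mult_mono) auto
    also have "\<dots> = (real b)^2 * ((real k + 1)^2 / 2 ^ k)" by (simp add: power_mult_distrib)
    finally show ?thesis .
  qed
  have "summable (\<lambda>k. norm ((?f \<circ> g) k))"
    by (rule summable_comparison_test'[where N = 0, OF summable_mult[OF summable_sq_geom]]) (use bound in auto)
  then have "(?f \<circ> g) summable_on UNIV" by (rule norm_summable_imp_summable_on)
  then have "?f summable_on (range g)" using summable_on_reindex[OF inj, of ?f] by blast
  then show ?thesis
    by (rule summable_on_cong_neutral[THEN iffD1, rotated -1]) (use supp in auto)
qed



definition P :: "nat \<Rightarrow> nat \<Rightarrow> bool" where
  "P b r \<longleftrightarrow> (\<forall>d. av b r d \<longlonglongrightarrow> mu b r d) \<and> (mu b r has_sum 1) UNIV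
     \<and> ((\<lambda>d. real_of_int d * mu b r d) has_sum 0) UNIV
     \<and> ((\<lambda>d. (real_of_int d)^2 * mu b r d) has_sum Var_mu b r) UNIV"

lemma Var_from:
  assumes "((\<lambda>d. real_of_int d * mu b r d) has_sum 0) UNIV"
    and "((\<lambda>d. (real_of_int d)^2 * mu b r d) has_sum V) UNIV"
  shows "Var_mu b r = V"
proof -
  have "mean_mu b r = 0" unfolding mean_mu_def using assms(1) by (rule infsumI)
  then show ?thesis unfolding Var_mu_def using assms(2) by (simp add: infsumI)
qed

lemma has_sum_point: "((\<lambda>d::int. if d = a then x else 0) has_sum (x::real)) UNIV"
proof -
  have "((\<lambda>d::int. if d = a then x else 0) has_sum (\<Sum>d\<in>{a}. if d = a then x else 0)) {a}"
    by (rule has_sum_finite) simp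
  then have "((\<lambda>d::int. if d = a then x else 0) has_sum x) {a}" by simp
  then show ?thesis by (rule has_sum_cong_neutral[THEN iffD1, rotated -1]) auto
qed

lemma P0: "P b 0"
proof -
  have m: "mu b 0 = (\<lambda>d. if d = 0 then 1 else 0)" by (rule ext) (simp add: mu0)
  have e1: "(\<lambda>d. real_of_int d * mu b 0 d) = (\<lambda>_. 0)" unfolding m by auto
  have e2: "(\<lambda>d. (real_of_int d)^2 * mu b 0 d) = (\<lambda>_. 0)" unfolding m by auto
  have s1: "((\<lambda>d. real_of_int d * mu b 0 d) has_sum 0) UNIV" unfolding e1 by simp
  have s2: "((\<lambda>d. (real_of_int d)^2 * mu b 0 d) has_sum 0) UNIV" unfolding e2 by simp
  show ?thesis unfolding P_def
    using av0[of b] s1 s2 Var_from[OF s1 s2] has_sum_point[of 0 1] by (simp add: m)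
qed

lemma P1:
  assumes b: "b \<ge> 2"
  shows "P b 1"
proof -
  have m: "mu b 1 = nu b" by (rule ext) (rule mu1[OF b])
  define m0 where "m0 = infsum (nu b) UNIV"
  define m1 where "m1 = infsum (\<lambda>d. real_of_int d * nu b d) UNIV"
  define m2 where "m2 = infsum (\<lambda>d. (real_of_int d)^2 * nu b d) UNIV"
  have h0: "(nu b has_sum m0) UNIV" unfolding m0_def using nu_summable[OF b, of 0] by simp
  have h1: "((\<lambda>d. real_of_int d * nu b d) has_sum m1) UNIV" unfolding m1_def using nu_summable[OF b, of 1] by simp
  have h2: "((\<lambda>d. (real_of_int d)^2 * nu b d) has_sum m2) UNIV" unfolding m2_def using nu_summable[OF b, of 2] by simp
  define c where "c = 1 - int b"
  have shift: "nu b (d + int b - 1) = nu b (d - c)" for d unfolding c_def by (simp add: algebra_simps)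
  note sm = shift_moments[OF h0 h1 h2, of c]
  have "((\<lambda>d. (if d = 1 then (real b - 1) / real b else 0) + 1 / real b * nu b (d - c)) has_sum ((real b - 1) / real b + 1 / real b * m0)) UNIV"
    by (intro has_sum_add has_sum_point has_sum_cmult_right sm(1))
  moreover have "(if d = 1 then (real b - 1) / real b else 0) + 1 / real b * nu b (d - c) = nu b d" for d
    using nu_rec[OF b, of d] by (simp add: shift)
  ultimately have "(nu b has_sum ((real b - 1) / real b + 1 / real b * m0)) UNIV" by simp
  then have "m0 = (real b - 1) / real b + 1 / real b * m0" using h0 by (rule has_sum_unique[rotated])
  then have "1 + m0 * real b = m0 + real b" using b by (simp add: field_simps)
  then have "(m0 - 1) * (real b - 1) = 0" by (simp add: algebra_simps)
  then have M0: "m0 = 1" using b by simp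
  have "((\<lambda>d. (if d = 1 then (real b - 1) / real b else 0) + 1 / real b * (real_of_int d * nu b (d - c))) has_sum ((real b - 1) / real b + 1 / real b * (m1 + real_of_int c * m0))) UNIV"
    by (intro has_sum_add has_sum_point has_sum_cmult_right sm(2))
  moreover have "(if d = 1 then (real b - 1) / real b else 0) + 1 / real b * (real_of_int d * nu b (d - c)) = real_of_int d * nu b d" for d
    using nu_rec[OF b, of d] by (simp add: shift algebra_simps)
  ultimately have "((\<lambda>d. real_of_int d * nu b d) has_sum ((real b - 1) / real b + 1 / real b * (m1 + real_of_int c * m0))) UNIV" by simp
  then have "m1 = (real b - 1) / real b + 1 / real b * (m1 + real_of_int c * m0)" using h1 by (rule has_sum_unique[rotated])
  then have "m1 * real b = m1" using b M0 unfolding c_def by (simp add: field_simps)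
  then have "m1 * (real b - 1) = 0" by (simp add: algebra_simps)
  then have M1: "m1 = 0" using b by simp
  show ?thesis unfolding P_def m
    using conv1[OF b] mu1[OF b] h0 h1 h2 M0 M1 Var_from[of b 1 m2] by (simp add: m)
qed



lemma mix:
  assumes b: "b \<ge> 2" "r0 < b" "r0 > 0" and PA: "P b rt" and PB: "P b (rt + 1)"
  shows "P b (b * rt + r0) \<and> Var_mu b (b * rt + r0) =
     real (b - r0) / real b * Var_mu b rt + real r0 / real b * Var_mu b (rt + 1) + real r0 * real (b - r0)"
proof -
  define p where "p = real (b - r0) / real b"
  define q where "q = real r0 / real b"
  define VA where "VA = Var_mu b rt"
  define VB where "VB = Var_mu b (rt + 1)"
  define cB where "cB = int r0 - int b"
  have cA: "\<And>d. av b rt d \<longlonglongrightarrow> mu b rt d" and hA0: "(mu b rt has_sum 1) UNIV"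
    and hA1: "((\<lambda>d. real_of_int d * mu b rt d) has_sum 0) UNIV"
    and hA2: "((\<lambda>d. (real_of_int d)^2 * mu b rt d) has_sum VA) UNIV"
    using PA unfolding P_def VA_def by auto
  have cB': "\<And>d. av b (rt + 1) d \<longlonglongrightarrow> mu b (rt + 1) d" and hB0: "(mu b (rt + 1) has_sum 1) UNIV"
    and hB1: "((\<lambda>d. real_of_int d * mu b (rt + 1) d) has_sum 0) UNIV"
    and hB2: "((\<lambda>d. (real_of_int d)^2 * mu b (rt + 1) d) has_sum VB) UNIV"
    using PB unfolding P_def VB_def by auto
  have conv: "av b (b * rt + r0) d \<longlonglongrightarrow> p * mu b rt (d - int r0) + q * mu b (rt + 1) (d - int r0 + int b)" for d
    unfolding p_def q_def by (rule rec_conv[OF b(1,2) cA cB'])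
  have eqB: "d - int r0 + int b = d - cB" for d by (simp add: cB_def)
  have mr: "mu b (b * rt + r0) = (\<lambda>d. p * mu b rt (d - int r0) + q * mu b (rt + 1) (d - cB))"
    by (rule ext) (simp add: mu_eq[OF conv] eqB)
  note sA = shift_moments[OF hA0 hA1 hA2, of "int r0"]
  note sB = shift_moments[OF hB0 hB1 hB2, of cB]
  have pq: "p + q = 1" using b unfolding p_def q_def by (simp add: of_nat_diff field_simps)
  have S0: "(mu b (b * rt + r0) has_sum (p * 1 + q * 1)) UNIV"
    unfolding mr by (intro has_sum_add has_sum_cmult_right sA(1) sB(1))
  have "((\<lambda>d. p * (real_of_int d * mu b rt (d - int r0)) + q * (real_of_int d * mu b (rt + 1) (d - cB)))
      has_sum (p * (0 + real_of_int (int r0) * 1) + q * (0 + real_of_int cB * 1))) UNIV"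
    by (intro has_sum_add has_sum_cmult_right sA(2) sB(2))
  moreover have "p * (0 + real_of_int (int r0) * 1) + q * (0 + real_of_int cB * 1) = 0"
    using b unfolding p_def q_def cB_def by (simp add: of_nat_diff field_simps)
  ultimately have S1: "((\<lambda>d. real_of_int d * mu b (b * rt + r0) d) has_sum 0) UNIV"
    unfolding mr by (simp add: algebra_simps)
  have "((\<lambda>d. p * ((real_of_int d)^2 * mu b rt (d - int r0)) + q * ((real_of_int d)^2 * mu b (rt + 1) (d - cB)))
      has_sum (p * (VA + 2 * real_of_int (int r0) * 0 + (real_of_int (int r0))^2 * 1)
             + q * (VB + 2 * real_of_int cB * 0 + (real_of_int cB)^2 * 1))) UNIV"
    by (intro has_sum_add has_sum_cmult_right sA(3) sB(3))
  moreover have "p * (VA + 2 * real_of_int (int r0) * 0 + (real_of_int (int r0))^2 * 1)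
             + q * (VB + 2 * real_of_int cB * 0 + (real_of_int cB)^2 * 1)
      = p * VA + q * VB + real r0 * real (b - r0)"
    using b unfolding p_def q_def cB_def by (simp add: of_nat_diff field_simps power2_eq_square)
  ultimately have S2: "((\<lambda>d. (real_of_int d)^2 * mu b (b * rt + r0) d) has_sum (p * VA + q * VB + real r0 * real (b - r0))) UNIV"
    unfolding mr by (simp add: algebra_simps)
  have V: "Var_mu b (b * rt + r0) = p * VA + q * VB + real r0 * real (b - r0)"
    by (rule Var_from[OF S1 S2])
  have "P b (b * rt + r0)"
    unfolding P_def using S0 S1 S2 V pq conv mu_eq[OF conv] by auto
  then show ?thesis using V unfolding p_def q_def VA_def VB_def by simp
qed

lemma zero_case:
  assumes b: "b \<ge> 2" and PA: "P b rt"
  shows "mu b (b * rt) = mu b rt"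
proof (rule ext)
  fix d
  have cA: "\<And>d. av b rt d \<longlonglongrightarrow> mu b rt d" using PA unfolding P_def by auto
  have "av b (b * rt + 0) d \<longlonglongrightarrow> real (b - 0) / real b * mu b rt (d - int 0) + real 0 / real b * 0"
    by (rule rec_conv[OF b _ cA]) (use b in auto)
  then have "av b (b * rt) d \<longlonglongrightarrow> mu b rt d" using b by simp
  then show "mu b (b * rt) d = mu b rt d" by (rule mu_eq)
qed

lemma P_all:
  assumes b: "b \<ge> 2"
  shows "P b r"
proof (induction r rule: less_induct)
  case (less r)
  consider "r = 0" | "r = 1" | "r \<ge> 2" by linarith
  then show ?case
  proof cases
    case 1 then show ?thesis by (simp add: P0)
  next
    case 2 then show ?thesis using P1[OF b] by simp
  next
    case 3
    define rt where "rt = r div b"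
    define r0 where "r0 = r mod b"
    have r: "r = b * rt + r0" unfolding rt_def r0_def by simp
    have r0b: "r0 < b" unfolding r0_def using b by simp
    have rtl: "rt < r" unfolding rt_def using b 3 by simp
    show ?thesis
    proof (cases "r0 = 0")
      case True
      have PA: "P b rt" by (rule less[OF rtl])
      have m: "mu b r = mu b rt" using zero_case[OF b PA] r True by simp
      have V: "Var_mu b r = Var_mu b rt" unfolding Var_mu_def mean_mu_def m ..
      have c: "av b r d \<longlonglongrightarrow> mu b r d" for d
      proof -
        have cA: "\<And>d. av b rt d \<longlonglongrightarrow> mu b rt d" using PA unfolding P_def by auto
        have "av b (b * rt + 0) d \<longlonglongrightarrow> real (b - 0) / real b * mu b rt (d - int 0) + real 0 / real b * 0"
          by (rule rec_conv[OF b _ cA]) (use b in auto)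
        then show ?thesis using b r True m by simp
      qed
      have "(\<forall>d. av b r d \<longlonglongrightarrow> mu b r d)" using c by blast
      moreover have "(mu b r has_sum 1) UNIV \<and> ((\<lambda>d. real_of_int d * mu b r d) has_sum 0) UNIV
        \<and> ((\<lambda>d. (real_of_int d)^2 * mu b r d) has_sum Var_mu b r) UNIV"
        using PA unfolding P_def m V by blast
      ultimately show ?thesis unfolding P_def by blast
    next
      case False
      have rt1: "rt + 1 < r"
      proof (cases "rt = 0")
        case True then show ?thesis using r 3 by simp
      next
        case False
        have "b * rt \<ge> 2 * rt" using b by simp
        then show ?thesis using r False \<open>r0 \<noteq> 0\<close> by linarith
      qed
      show ?thesis using mix[OF b r0b _ less[OF rtl] less[OF rt1]] False r by simp
    qed
  qed
qed

theorem mainTheorem10: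
  fixes b rt r0 :: nat
  assumes "b \<ge> 2" and "r0 < b"
  shows "Var_mu b (b * rt + r0) =
           real (b - r0) / real b * Var_mu b rt
         + real r0 / real b * Var_mu b (rt + 1)
         + real r0 * real (b - r0)"
proof (cases "r0 = 0")
  case True
  have m: "mu b (b * rt) = mu b rt" by (rule zero_case[OF assms(1) P_all[OF assms(1)]])
  have "Var_mu b (b * rt) = Var_mu b rt" unfolding Var_mu_def mean_mu_def m ..
  then show ?thesis using True assms by simp
next
  case False
  then show ?thesis using mix[OF assms _ P_all[OF assms(1)] P_all[OF assms(1)]] by simp
qed


end
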